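(* Let $d\ge2$ and let $B$ be the open unit ball of $\mathbb C^d$. There is no regular Hilbert space of holomorphic functions on $B$ whose kernel $k$ has the property that for all $n\ge1$, all distinct $\lambda_1,\dots,\lambda_n\in B$ and all $z_1,\dots,z_n\in\mathbb C$: there exists a holomorphic $\varphi:B\to\mathbb C$ with $\sup_B|\varphi|\le1$ and $\varphi(\lambda_i)=z_i$ for all $i$ if and only if the matrix $[(1-z_j\bar z_i)k_{\lambda_i}(\lambda_j)]_{i,j=1}^n$ is positive semidefinite.
   Context: Regular space: a Hilbert space $\mathcal H$ of holomorphic functions on $B$ with reproducing kernel $k_\lambda(\mu)$ ($\langle f,k_\lambda\rangle=f(\lambda)$), such that the coordinate multiplications $M^r$ ($(M^rf)(\lambda)=\lambda^rf(\lambda)$) are bounded, $M=(M^1,\dots,M^d)$ has Taylor spectrum in $\mathrm{cl}(B)$ and essential Taylor spectrum in $\partial B$, and $\dim\bigcap_r\ker(\lambda^r-M^r)^*=1$ for all $\lambda\in B$. *)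

theory Defs
  imports "HOL-Analysis.Analysis"
begin

text \<open>Points of C^d are vectors of type complex^'n, d = CARD('n).
  The index type is linearly ordered only to fix signs in the Koszul complex.\<close>

type_synonym 'n hfun = "complex^'n \<Rightarrow> complex"

definition unit_ball :: "(complex^('n::finite)) set" where
  "unit_ball = ball 0 1"

text \<open>Holomorphy on an open set of C^d: complex Frechet differentiability.\<close>
definition cholo :: "'n::finite hfun \<Rightarrow> (complex^('n::finite)) set \<Rightarrow> bool" where
  "cholo f S \<longleftrightarrow> (\<forall>z\<in>S. \<exists>L. (f has_derivative L) (at z) \<and> (\<forall>c v. L (c *s v) = c * L v))"

definition hnorm :: "('n::finite hfun \<Rightarrow> 'n hfun \<Rightarrow> complex) \<Rightarrow> 'n hfun \<Rightarrow> real" where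
  "hnorm ip f = sqrt (Re (ip f f))"

text \<open>A Hilbert space of holomorphic functions on the ball B (functions are extended by 0
  outside B so that H is a genuine linear space of functions).\<close>
definition hilbert_fun_space :: "'n::finite hfun set \<Rightarrow> ('n hfun \<Rightarrow> 'n hfun \<Rightarrow> complex) \<Rightarrow> bool" where
  "hilbert_fun_space H ip \<longleftrightarrow>
     (\<forall>f\<in>H. cholo f unit_ball \<and> (\<forall>z. z \<notin> unit_ball \<longrightarrow> f z = 0)) \<and>
     (\<lambda>z. 0) \<in> H \<and>
     (\<forall>f\<in>H. \<forall>g\<in>H. (\<lambda>z. f z + g z) \<in> H) \<and>
     (\<forall>c. \<forall>f\<in>H. (\<lambda>z. c * f z) \<in> H) \<and>
     (\<forall>f\<in>H. \<forall>g\<in>H. \<forall>h\<in>H. ip (\<lambda>z. f z + g z) h = ip f h + ip g h) \<and>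
     (\<forall>c. \<forall>f\<in>H. \<forall>g\<in>H. ip (\<lambda>z. c * f z) g = c * ip f g) \<and>
     (\<forall>f\<in>H. \<forall>g\<in>H. ip g f = cnj (ip f g)) \<and>
     (\<forall>f\<in>H. Re (ip f f) \<ge> 0) \<and>
     (\<forall>f\<in>H. ip f f = 0 \<longrightarrow> f = (\<lambda>z. 0)) \<and>
     (\<forall>s. (\<forall>i. s i \<in> H) \<and>
          (\<forall>e>0. \<exists>N. \<forall>m\<ge>N. \<forall>n\<ge>N. hnorm ip (\<lambda>z. s m z - s n z) < e) \<longrightarrow>
          (\<exists>f\<in>H. (\<lambda>i. hnorm ip (\<lambda>z. s i z - f z)) \<longlonglongrightarrow> 0))"

text \<open>Reproducing kernel: k \<lambda> = k_\<lambda>, so k \<lambda> \<mu> = k_\<lambda>(\<mu>).\<close>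
definition reproducing_kernel ::
  "'n::finite hfun set \<Rightarrow> ('n hfun \<Rightarrow> 'n hfun \<Rightarrow> complex) \<Rightarrow> (complex^('n::finite) \<Rightarrow> 'n hfun) \<Rightarrow> bool" where
  "reproducing_kernel H ip k \<longleftrightarrow>
     (\<forall>w\<in>unit_ball. k w \<in> H \<and> (\<forall>f\<in>H. ip f (k w) = f w))"

definition mult_op :: "'n \<Rightarrow> 'n::finite hfun \<Rightarrow> 'n hfun" where
  "mult_op r f = (\<lambda>z. z$r * f z)"

definition bounded_mults :: "'n::finite hfun set \<Rightarrow> ('n hfun \<Rightarrow> 'n hfun \<Rightarrow> complex) \<Rightarrow> bool" where
  "bounded_mults H ip \<longleftrightarrow>
     (\<forall>r. (\<forall>f\<in>H. mult_op r f \<in> H) \<and> (\<exists>C. \<forall>f\<in>H. hnorm ip (mult_op r f) \<le> C * hnorm ip f))"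

text \<open>Koszul complex of M - \<lambda>, all degrees at once: a chain assigns to every subset I of
  the index set an element of H (the coefficient of e_I).  Differential:
  d(x e_I) = sum_j (M_j - \<lambda>_j) x e_j \<and> e_I.\<close>
definition koszul_chains :: "'n::finite hfun set \<Rightarrow> ('n set \<Rightarrow> 'n hfun) set" where
  "koszul_chains H = {c. \<forall>I. c I \<in> H}"

definition koszul_d :: "(complex, 'n::{finite,linorder}) vec \<Rightarrow> ('n set \<Rightarrow> 'n hfun) \<Rightarrow> ('n set \<Rightarrow> 'n hfun)" where
  "koszul_d lam c = (\<lambda>J z. \<Sum>j\<in>J. (-1) ^ card {i\<in>J. i < j} * ((z$j - lam$j) * c (J - {j}) z))"

definition koszul_exact :: "((complex, 'n::{finite,linorder}) vec \<Rightarrow> complex) set \<Rightarrow> (complex, 'n) vec \<Rightarrow> bool" where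
  "koszul_exact H lam \<longleftrightarrow>
     {c\<in>koszul_chains H. koszul_d lam c = (\<lambda>I z. 0)} = koszul_d lam ` koszul_chains H"

text \<open>Fredholm: all homology spaces finite dimensional.\<close>
definition koszul_fredholm :: "((complex, 'n::{finite,linorder}) vec \<Rightarrow> complex) set \<Rightarrow> (complex, 'n) vec \<Rightarrow> bool" where
  "koszul_fredholm H lam \<longleftrightarrow>
     (\<exists>F. finite F \<and> F \<subseteq> koszul_chains H \<and>
        (\<forall>c\<in>koszul_chains H. koszul_d lam c = (\<lambda>I z. 0) \<longrightarrow>
           (\<exists>a b. b \<in> koszul_chains H \<and>
              c = (\<lambda>I z. (\<Sum>v\<in>F. a v * v I z) + koszul_d lam b I z))))"

definition taylor_spectrum :: "((complex, 'n::{finite,linorder}) vec \<Rightarrow> complex) set \<Rightarrow> ((complex, 'n) vec) set" where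
  "taylor_spectrum H = {lam. \<not> koszul_exact H lam}"

definition essential_taylor_spectrum :: "((complex, 'n::{finite,linorder}) vec \<Rightarrow> complex) set \<Rightarrow> ((complex, 'n) vec) set" where
  "essential_taylor_spectrum H = {lam. \<not> koszul_fredholm H lam}"

definition joint_adj_kernel ::
  "'n::finite hfun set \<Rightarrow> ('n hfun \<Rightarrow> 'n hfun \<Rightarrow> complex) \<Rightarrow> complex^('n::finite) \<Rightarrow> 'n hfun set" where
  "joint_adj_kernel H ip lam =
     {g\<in>H. \<forall>r. \<forall>f\<in>H. ip (\<lambda>z. lam$r * f z - mult_op r f z) g = 0}"

definition dim_one :: "'n::finite hfun set \<Rightarrow> bool" where
  "dim_one E \<longleftrightarrow> (\<exists>g\<in>E. g \<noteq> (\<lambda>z. 0) \<and> (\<forall>h\<in>E. \<exists>c. h = (\<lambda>z. c * g z)))"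

definition regular_hilbert_space ::
  "((complex, 'n::{finite,linorder}) vec \<Rightarrow> complex) set \<Rightarrow> ('n hfun \<Rightarrow> 'n hfun \<Rightarrow> complex) \<Rightarrow> ((complex, 'n) vec \<Rightarrow> 'n hfun) \<Rightarrow> bool" where
  "regular_hilbert_space H ip k \<longleftrightarrow>
     hilbert_fun_space H ip \<and> reproducing_kernel H ip k \<and> bounded_mults H ip \<and>
     taylor_spectrum H \<subseteq> closure unit_ball \<and>
     essential_taylor_spectrum H \<subseteq> frontier unit_ball \<and>
     (\<forall>lam\<in>unit_ball. dim_one (joint_adj_kernel H ip lam))"

definition psd_mat :: "nat \<Rightarrow> (nat \<Rightarrow> nat \<Rightarrow> complex) \<Rightarrow> bool" where
  "psd_mat n A \<longleftrightarrow> (\<forall>x. (\<Sum>i<n. \<Sum>j<n. cnj (x i) * A i j * x j) \<in> \<real> \<and>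
                         Re (\<Sum>i<n. \<Sum>j<n. cnj (x i) * A i j * x j) \<ge> 0)"

definition pick_property :: "(complex^('n::finite) \<Rightarrow> 'n::finite hfun) \<Rightarrow> bool" where
  "pick_property k \<longleftrightarrow>
     (\<forall>n::nat. n \<ge> 1 \<longrightarrow> (\<forall>(lam :: nat \<Rightarrow> complex^'n) (z :: nat \<Rightarrow> complex).
        inj_on lam {..<n} \<and> (\<forall>i<n. lam i \<in> unit_ball) \<longrightarrow>
        ((\<exists>\<phi>. cholo \<phi> unit_ball \<and> (\<forall>w\<in>unit_ball. norm (\<phi> w) \<le> 1) \<and> (\<forall>i<n. \<phi> (lam i) = z i))
         \<longleftrightarrow> psd_mat n (\<lambda>i j. (1 - z j * cnj (z i)) * k (lam i) (lam j)))))"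

end

theory Submission
  imports Defs "HOL-Complex_Analysis.Complex_Analysis"
begin


definition cip :: "complex^('n::finite) \<Rightarrow> complex^'n \<Rightarrow> complex" where
  "cip a b = (\<Sum>r\<in>UNIV. a$r * cnj (b$r))"

lemma norm_sq_vec: "(norm (x::complex^('n::finite)))^2 = (\<Sum>r\<in>UNIV. (cmod (x$r))^2)"
  unfolding norm_vec_def L2_set_def by (simp add: sum_nonneg)

lemma cip_self: "cip a a = of_real ((norm a)^2)"
proof -
  have "cip a a = (\<Sum>r\<in>UNIV. of_real ((cmod (a$r))^2))"
    unfolding cip_def by (intro sum.cong refl) (metis complex_norm_square)
  also have "\<dots> = of_real ((norm a)^2)" by (simp add: norm_sq_vec)
  finally show ?thesis .
qed

lemma cip_cs: "cmod (cip a b) \<le> norm a * norm b"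
proof -
  have "cmod (cip a b) \<le> (\<Sum>r\<in>UNIV. cmod (a$r) * cmod (b$r))"
    unfolding cip_def by (rule order.trans[OF norm_sum]) (simp add: norm_mult)
  also have "\<dots> \<le> L2_set (\<lambda>r. cmod (a$r)) UNIV * L2_set (\<lambda>r. cmod (b$r)) UNIV"
    using L2_set_mult_ineq[of "\<lambda>r. cmod (a$r)" "\<lambda>r. cmod (b$r)" UNIV] by simp
  finally show ?thesis by (simp add: norm_vec_def)
qed

lemma cip_cnj: "cnj (cip a b) = cip b a"
  unfolding cip_def by (simp add: mult.commute)

lemma cip_scale: "cip (c *s a) b = c * cip a b"
  unfolding cip_def by (simp add: sum_distrib_left mult.assoc)

lemma norm_smult_vec: "norm (c *s (x::complex^('n::finite))) = cmod c * norm x"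
proof -
  have "(norm (c *s x))^2 = (cmod c * norm x)^2"
    by (simp add: norm_sq_vec power_mult_distrib norm_mult sum_distrib_left)
  then show ?thesis by (simp add: power2_eq_imp_eq)
qed

lemma cholo_lin: "cholo (\<lambda>z. cip z a) S"
proof -
  have bl: "bounded_linear (\<lambda>z. cip z a)"
    unfolding cip_def
    by (intro bounded_linear_sum bounded_linear_mult_left[THEN bounded_linear_compose] bounded_linear_vec_nth)
  show ?thesis unfolding cholo_def
    using bl bounded_linear_imp_has_derivative[OF bl] cip_scale by blast
qed



lemma bl_smult: "bounded_linear (\<lambda>h::complex. h *s (u::complex^('n::finite)))"
proof (rule bounded_linear_intro[where K="norm u"])
  show "\<And>x y. (x + y) *s u = x *s u + y *s u" by (simp add: vector_sadd_rdistrib)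
  show "\<And>r x. (r *\<^sub>R x) *s u = r *\<^sub>R (x *s u)"
  proof -
    fix r x
    have "(r *\<^sub>R x) *s u = complex_of_real r *s (x *s u)"
      by (simp add: scaleR_conv_of_real vector_smult_assoc)
    also have "\<dots> = r *\<^sub>R (x *s u)"
      unfolding vec_eq_iff by (simp add: scaleR_conv_of_real[where 'a=complex])
    finally show "(r *\<^sub>R x) *s u = r *\<^sub>R (x *s u)" .
  qed
  show "\<And>x. norm (x *s u) \<le> norm x * norm u" by (simp add: norm_smult_vec)
qed

lemma unit_ball_iff: "z \<in> unit_ball \<longleftrightarrow> norm z < 1"
  by (simp add: unit_ball_def)

lemma cholo_slice_hol:
  assumes ch: "cholo \<phi> unit_ball" and nu: "norm u = 1"
  shows "(\<lambda>t. \<phi> (t *s u)) holomorphic_on ball 0 1"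
  unfolding holomorphic_on_def
proof
  fix t :: complex assume "t \<in> ball 0 1"
  then have "t *s u \<in> unit_ball" by (simp add: unit_ball_iff norm_smult_vec nu)
  then obtain L where L: "(\<phi> has_derivative L) (at (t *s u))" "\<forall>c v. L (c *s v) = c * L v"
    using ch unfolding cholo_def by blast
  have d1: "((\<lambda>t. t *s u) has_derivative (\<lambda>h. h *s u)) (at t)"
    using bl_smult bounded_linear_imp_has_derivative by blast
  have "((\<lambda>t. \<phi> (t *s u)) has_derivative (\<lambda>h. L (h *s u))) (at t)"
    using diff_chain_at[OF d1 L(1)] by (simp add: o_def)
  also have "(\<lambda>h. L (h *s u)) = (*) (L u)" using L(2) by (auto simp: mult.commute)
  finally have "((\<lambda>t. \<phi> (t *s u)) has_field_derivative (L u)) (at t)"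
    by (simp add: has_field_derivative_def)
  then show "(\<lambda>t. \<phi> (t *s u)) field_differentiable at t within ball 0 1"
    using field_differentiable_at_within field_differentiable_def by blast
qed

lemma cholo_schwarz:
  assumes ch: "cholo \<phi> unit_ball" and bd: "\<forall>w\<in>unit_ball. cmod (\<phi> w) \<le> 1"
    and z0: "\<phi> 0 = 0" and lb: "lam \<in> unit_ball"
  shows "cmod (\<phi> lam) \<le> norm lam"
proof (cases "lam = 0")
  case True then show ?thesis using z0 by simp
next
  case False
  define \<rho> where "\<rho> = norm lam"
  have rp: "\<rho> > 0" "\<rho> < 1" using False lb by (auto simp: \<rho>_def unit_ball_iff)
  define u where "u = complex_of_real (1/\<rho>) *s lam"
  have nu: "norm u = 1" using rp by (simp add: u_def norm_smult_vec \<rho>_def norm_divide)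
  have lam_eq: "complex_of_real \<rho> *s u = lam" using rp
    by (simp add: u_def vector_smult_assoc flip: of_real_mult)
  show ?thesis
  proof (rule ccontr)
    assume "\<not> ?thesis"
    then have w: "cmod (\<phi> lam) > \<rho>" by (simp add: \<rho>_def)
    define s where "s = (1 + \<rho> / cmod (\<phi> lam)) / 2"
    have wpos: "cmod (\<phi> lam) > 0" using w rp by linarith
    have s1: "s < 1" "s > 0" using w wpos rp by (auto simp: s_def field_simps)
    have sw: "s * cmod (\<phi> lam) > \<rho>" using w wpos by (simp add: s_def field_simps)
    define g where "g = (\<lambda>t. complex_of_real s * \<phi> (t *s u))"
    have hg: "g holomorphic_on ball 0 1"
      unfolding g_def by (intro holomorphic_intros cholo_slice_hol[OF ch nu])
    have g0: "g 0 = 0" by (simp add: g_def z0)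
    have gb: "cmod (g t) < 1" if "cmod t < 1" for t
    proof -
      have "t *s u \<in> unit_ball" using that by (simp add: unit_ball_iff norm_smult_vec nu)
      then have "cmod (\<phi> (t *s u)) \<le> 1" using bd by blast
      then have "s * cmod (\<phi> (t *s u)) \<le> s" using s1 by (simp add: mult_le_cancel_left1)
      then have "s * cmod (\<phi> (t *s u)) < 1" using s1 by linarith
      then show ?thesis using s1 by (simp add: g_def norm_mult)
    qed
    have "cmod (g (complex_of_real \<rho>)) \<le> cmod (complex_of_real \<rho>)"
      by (rule Schwarz_Lemma(1)[OF hg g0 gb]) (use rp in auto)
    then have "s * cmod (\<phi> lam) \<le> \<rho>" using s1 rp
      by (simp add: g_def lam_eq norm_mult)
    then show False using sw by linarith
  qed
qed



definition qf :: "nat \<Rightarrow> (nat \<Rightarrow> nat \<Rightarrow> complex) \<Rightarrow> (nat \<Rightarrow> complex) \<Rightarrow> complex" where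
  "qf n A x = (\<Sum>i<n. \<Sum>j<n. cnj (x i) * A i j * x j)"

lemma psdE: "psd_mat n A \<Longrightarrow> qf n A x \<in> \<real> \<and> Re (qf n A x) \<ge> 0"
  unfolding psd_mat_def qf_def by blast

lemma psdI: "(\<And>x. qf n A x \<in> \<real> \<and> Re (qf n A x) \<ge> 0) \<Longrightarrow> psd_mat n A"
  unfolding psd_mat_def qf_def by blast

lemma sum_supp2:
  fixes n :: nat
  assumes "i<n" "j<n" "i\<noteq>j" "\<And>t. t \<noteq> i \<Longrightarrow> t \<noteq> j \<Longrightarrow> h t = 0"
  shows "(\<Sum>t<n. h t) = h i + h j"
proof -
  have "(\<Sum>t<n. h t) = (\<Sum>t\<in>{i,j}. h t)"
    by (rule sum.mono_neutral_right) (use assms in auto)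
  then show ?thesis using assms(3) by simp
qed

lemma sum_supp1:
  fixes n :: nat
  assumes "i<n" "\<And>t. t \<noteq> i \<Longrightarrow> h t = 0"
  shows "(\<Sum>t<n. h t) = h i"
proof -
  have "(\<Sum>t<n. h t) = (\<Sum>t\<in>{i}. h t)"
    by (rule sum.mono_neutral_right) (use assms in auto)
  then show ?thesis by simp
qed

lemma qf_supp2:
  assumes "i<n" "j<n" "i\<noteq>j" "\<And>t. t \<noteq> i \<Longrightarrow> t \<noteq> j \<Longrightarrow> x t = 0"
  shows "qf n A x = cnj(x i)*A i i*x i + cnj(x i)*A i j*x j + cnj(x j)*A j i*x i + cnj(x j)*A j j*x j"
proof -
  have "\<And>a. (\<Sum>b<n. cnj (x a) * A a b * x b) = cnj (x a) * A a i * x i + cnj (x a) * A a j * x j"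
    by (rule sum_supp2) (use assms in auto)
  then have "qf n A x = (\<Sum>a<n. cnj (x a) * A a i * x i + cnj (x a) * A a j * x j)"
    unfolding qf_def by simp
  also have "\<dots> = cnj(x i)*A i i*x i + cnj(x i)*A i j*x j + (cnj(x j)*A j i*x i + cnj(x j)*A j j*x j)"
    by (rule sum_supp2) (use assms in auto)
  finally show ?thesis by (simp add: add.assoc)
qed

lemma qf_supp1:
  assumes "i<n" "\<And>t. t \<noteq> i \<Longrightarrow> x t = 0"
  shows "qf n A x = cnj(x i)*A i i*x i"
proof -
  have "\<And>a. (\<Sum>b<n. cnj (x a) * A a b * x b) = cnj (x a) * A a i * x i"
    by (rule sum_supp1) (use assms in auto)
  then have "qf n A x = (\<Sum>a<n. cnj (x a) * A a i * x i)"
    unfolding qf_def by simp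
  also have "\<dots> = cnj(x i)*A i i*x i"
    by (rule sum_supp1) (use assms in auto)
  finally show ?thesis .
qed

lemma psd_diag: assumes "psd_mat n A" "i<n" shows "A i i \<in> \<real>" "Re (A i i) \<ge> 0"
proof -
  have "qf n A (\<lambda>t. if t = i then 1 else 0) = A i i"
    by (subst qf_supp1[OF assms(2)]) auto
  then show "A i i \<in> \<real>" "Re (A i i) \<ge> 0" using psdE[OF assms(1), of "\<lambda>t. if t = i then 1 else 0"] by auto
qed

lemma psd_herm: assumes "psd_mat n A" "i<n" "j<n" shows "A j i = cnj (A i j)"
proof (cases "i = j")
  case True then show ?thesis using psd_diag[OF assms(1,2)] by (simp add: Reals_cnj_iff)
next
  case False
  have d: "Im (A i i) = 0" "Im (A j j) = 0" using psd_diag[OF assms(1)] assms(2,3)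
    by (auto simp: complex_is_Real_iff)
  have "qf n A (\<lambda>t. if t = i then 1 else if t = j then 1 else 0) = A i i + A i j + A j i + A j j"
    by (subst qf_supp2[OF assms(2,3) False]) (use False in auto)
  then have 1: "Im (A i j) + Im (A j i) = 0"
    using psdE[OF assms(1), of "\<lambda>t. if t = i then 1 else if t = j then 1 else 0"] d
    by (auto simp: complex_is_Real_iff)
  have "qf n A (\<lambda>t. if t = i then 1 else if t = j then \<i> else 0) = A i i + A i j * \<i> - \<i> * A j i + A j j"
    by (subst qf_supp2[OF assms(2,3) False]) (use False in \<open>auto simp: algebra_simps\<close>)
  then have 2: "Re (A i j) - Re (A j i) = 0"
    using psdE[OF assms(1), of "\<lambda>t. if t = i then 1 else if t = j then \<i> else 0"] d
    by (auto simp: complex_is_Real_iff)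
  show ?thesis using 1 2 by (simp add: complex_eq_iff)
qed



lemma qf2: "qf 2 A x = cnj(x 0)*A 0 0*x 0 + cnj(x 0)*A 0 1*x 1 + cnj(x 1)*A 1 0*x 0 + cnj(x 1)*A 1 1*x 1"
  by (simp add: qf_def numeral_2_eq_2 lessThan_Suc algebra_simps)

lemma qf3: "qf 3 A x = cnj(x 0)*A 0 0*x 0 + cnj(x 0)*A 0 1*x 1 + cnj(x 0)*A 0 2*x 2
   + cnj(x 1)*A 1 0*x 0 + cnj(x 1)*A 1 1*x 1 + cnj(x 1)*A 1 2*x 2
   + cnj(x 2)*A 2 0*x 0 + cnj(x 2)*A 2 1*x 1 + cnj(x 2)*A 2 2*x 2"
  by (simp add: qf_def numeral_3_eq_3 numeral_2_eq_2 lessThan_Suc algebra_simps)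

lemma real_of_Reals: "z \<in> \<real> \<Longrightarrow> z = of_real (Re z)"
  by (simp add: complex_is_Real_iff complex_eq_iff)

lemma psd2_det:
  assumes p: "psd_mat 2 A" and a: "A 0 0 = of_real a" "a > 0"
  shows "(cmod (A 0 1))^2 \<le> a * Re (A 1 1)"
proof -
  define m where "m = A 0 1"
  define b where "b = Re (A 1 1)"
  have h: "A 1 0 = cnj m" using psd_herm[OF p, of 0 1] by (simp add: m_def)
  have bb: "A 1 1 = of_real b" using psd_diag[OF p, of 1] by (simp add: b_def real_of_Reals)
  define x where "x = (\<lambda>t::nat. if t = 0 then - m else of_real a)"
  have "Re (qf 2 A x) = a * (a * b - (Re m ^ 2 + Im m ^ 2))"
    using h bb unfolding m_def by (simp add: qf2 x_def m_def a algebra_simps power2_eq_square)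
  moreover have "Re (qf 2 A x) \<ge> 0" using psdE[OF p] by blast
  ultimately have "a * b - (Re m ^ 2 + Im m ^ 2) \<ge> 0" using a(2)
    by (simp add: zero_le_mult_iff)
  then show ?thesis by (simp add: m_def b_def cmod_power2)
qed

lemma psd2_intro:
  assumes h: "A 1 0 = cnj (A 0 1)" and a: "A 0 0 = of_real a" "a > 0"
    and b: "A 1 1 = of_real b" and d: "(cmod (A 0 1))^2 \<le> a * b"
  shows "psd_mat 2 A"
proof (rule psdI)
  fix x
  define m where "m = A 0 1"
  have d': "Re m ^ 2 + Im m ^ 2 \<le> a * b" using d by (simp add: m_def cmod_power2)
  have "Im (qf 2 A x) = 0"
    using h a b unfolding m_def by (simp add: qf2 algebra_simps)
  moreover have "a * Re (qf 2 A x) = (a * Re (x 0) + Re (m * x 1))^2 + (a * Im (x 0) + Im (m * x 1))^2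
      + (a * b - (Re m ^ 2 + Im m ^ 2)) * (Re (x 1)^2 + Im (x 1)^2)"
    using h a b unfolding m_def by (simp add: qf2 algebra_simps power2_eq_square)
  moreover have "(a * b - (Re m ^ 2 + Im m ^ 2)) * (Re (x 1)^2 + Im (x 1)^2) \<ge> 0"
    using d' by simp
  ultimately have "Im (qf 2 A x) = 0" "a * Re (qf 2 A x) \<ge> 0" by (auto intro: add_nonneg_nonneg)
  then show "qf 2 A x \<in> \<real> \<and> Re (qf 2 A x) \<ge> 0" using a(2)
    by (simp add: complex_is_Real_iff zero_le_mult_iff)
qed

lemma psd3_force:
  assumes p: "psd_mat 3 A" and a: "A 0 0 = of_real a" "a > 0"
    and sing: "A 0 0 * A 1 1 = A 0 1 * A 1 0"
  shows "A 2 1 * A 0 0 = A 2 0 * A 0 1"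
proof (rule ccontr)
  assume ne: "\<not> ?thesis"
  define r where "r = A 2 1 * A 0 0 - A 2 0 * A 0 1"
  have rne: "r \<noteq> 0" using ne by (simp add: r_def)
  define c where "c = Re (A 2 2)"
  have cc: "A 2 2 = of_real c" using psd_diag[OF p, of 2] by (simp add: c_def real_of_Reals)
  have c0: "c \<ge> 0" using psd_diag[OF p, of 2] by (simp add: c_def)
  define s where "s = 1 / (c + 1)"
  have s0: "s > 0" "s * c < 1" using c0 by (auto simp: s_def field_simps)
  have h10: "A 1 0 = cnj (A 0 1)" using psd_herm[OF p, of 0 1] by simp
  have h20: "A 2 0 = cnj (A 0 2)" using psd_herm[OF p, of 0 2] by simp
  have h21: "A 2 1 = cnj (A 1 2)" using psd_herm[OF p, of 1 2] by simp
  define t where "t = - (of_real s) * r"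
  define x where "x = (\<lambda>i::nat. if i = 0 then - A 0 1 else if i = 1 then A 0 0 else t)"
  have "qf 3 A x = A 0 0 * (A 0 0 * A 1 1 - A 0 1 * A 1 0) + t * cnj r + cnj t * r + cnj t * t * A 2 2"
    using h10 h20 h21 a by (simp add: qf3 x_def r_def algebra_simps)
  also have "\<dots> = t * cnj r + cnj t * r + cnj t * t * A 2 2" using sing by simp
  also have "\<dots> = of_real (s * (s * c - 2)) * (r * cnj r)"
    by (simp add: t_def cc algebra_simps)
  also have "\<dots> = of_real (s * (s * c - 2) * (cmod r)^2)"
    by (simp only: complex_norm_square of_real_mult)
  finally have q: "Re (qf 3 A x) = s * (s * c - 2) * (cmod r)^2"
    by simp
  have "(cmod r)^2 > 0" using rne by simp
  moreover have "s * (s * c - 2) < 0" using s0 by (simp add: mult_pos_neg)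
  ultimately have "Re (qf 3 A x) < 0" unfolding q by (simp add: mult_neg_pos)
  then show False using psdE[OF p, of x] by simp
qed



lemma pick_fwd:
  assumes "pick_property k" "n \<ge> 1" "inj_on lam {..<n}" "\<forall>i<n. lam i \<in> unit_ball"
    "cholo \<phi> unit_ball" "\<forall>w\<in>unit_ball. cmod (\<phi> w) \<le> 1" "\<forall>i<n. \<phi> (lam i) = z i"
  shows "psd_mat n (\<lambda>i j. (1 - z j * cnj (z i)) * k (lam i) (lam j))"
  using assms unfolding pick_property_def by blast

lemma pick_bwd:
  assumes "pick_property k" "n \<ge> 1" "inj_on lam {..<n}" "\<forall>i<n. lam i \<in> unit_ball"
    "psd_mat n (\<lambda>i j. (1 - z j * cnj (z i)) * k (lam i) (lam j))"
  shows "\<exists>\<phi>. cholo \<phi> unit_ball \<and> (\<forall>w\<in>unit_ball. cmod (\<phi> w) \<le> 1) \<and> (\<forall>i<n. \<phi> (lam i) = z i)"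
  using assms unfolding pick_property_def by blast

lemma cholo_const: "cholo (\<lambda>_. c) S"
  unfolding cholo_def by (auto intro!: exI[of _ "\<lambda>_. 0"])

lemma zero_in_ball: "0 \<in> unit_ball" by (simp add: unit_ball_iff)

lemma K1:
  fixes k :: "complex^('n::finite) \<Rightarrow> 'n hfun"
  assumes pk: "pick_property k" and lb: "l \<in> unit_ball"
  shows "k l l = of_real (Re (k l l))" "Re (k l l) > 0"
proof -
  have p: "psd_mat 1 (\<lambda>i j. (1 - (\<lambda>_. 0) j * cnj ((\<lambda>_. 0) i)) * k ((\<lambda>_. l) i) ((\<lambda>_. l) j))"
    by (rule pick_fwd[OF pk, of 1 "\<lambda>_. l" "\<lambda>_. 0"]) (use lb cholo_const in \<open>auto simp: inj_on_def\<close>)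
  from psd_diag[OF p, of 0] show r: "k l l = of_real (Re (k l l))" by (simp add: real_of_Reals)
  have ge: "Re (k l l) \<ge> 0" using psd_diag[OF p, of 0] by simp
  show "Re (k l l) > 0"
  proof (rule ccontr)
    assume "\<not> ?thesis"
    then have "k l l = 0" using ge r by (metis linorder_not_le order.antisym of_real_0)
    then have "psd_mat 1 (\<lambda>i j. (1 - (\<lambda>_. 2) j * cnj ((\<lambda>_. 2) i)) * k ((\<lambda>_. l) i) ((\<lambda>_. l) j))"
      by (intro psdI) (simp add: qf_def)
    from pick_bwd[OF pk _ _ _ this] lb obtain \<phi> where
      "\<forall>w\<in>unit_ball. cmod (\<phi> w) \<le> 1" "\<phi> l = 2" by (auto simp: inj_on_def)
    then show False using lb by fastforce
  qed
qed

lemma cip_scale2: "cip a (c *s b) = cnj c * cip a b"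
  unfolding cip_def by (simp add: sum_distrib_left algebra_simps)

lemma cip_cholo_bound:
  assumes "norm u \<le> 1" shows "\<forall>w\<in>unit_ball. cmod (cip w u) \<le> 1"
proof
  fix w :: "complex^'a" assume "w \<in> unit_ball"
  then have "norm w < 1" by (simp add: unit_ball_iff)
  then have "norm w * norm u \<le> 1" using assms by (simp add: mult_le_one)
  then show "cmod (cip w u) \<le> 1" using cip_cs[of w u] by linarith
qed



lemma inj2: "a \<noteq> b \<Longrightarrow> inj_on (\<lambda>i::nat. if i = 0 then a else b) {..<2}"
  unfolding inj_on_def by (auto simp: numeral_2_eq_2 less_Suc_eq)

lemma inj3: "a \<noteq> b \<Longrightarrow> a \<noteq> c \<Longrightarrow> b \<noteq> c \<Longrightarrow>
   inj_on (\<lambda>i::nat. if i = 0 then a else if i = 1 then b else c) {..<3}"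
  unfolding inj_on_def by (auto simp: numeral_3_eq_3 less_Suc_eq)

lemma all2: "(\<forall>i<(2::nat). P i) \<longleftrightarrow> P 0 \<and> P 1"
  by (auto simp: numeral_2_eq_2 less_Suc_eq)

lemma all3: "(\<forall>i<(3::nat). P i) \<longleftrightarrow> P 0 \<and> P 1 \<and> P 2"
  by (auto simp: eval_nat_numeral less_Suc_eq)

lemma K_herm:
  fixes k :: "complex^('n::finite) \<Rightarrow> 'n hfun"
  assumes pk: "pick_property k" and lb: "l \<in> unit_ball" and l0: "l \<noteq> 0"
  shows "k l 0 = cnj (k 0 l)"
proof -
  let ?lam = "\<lambda>i::nat. if i = 0 then 0 else l"
  have p: "psd_mat 2 (\<lambda>i j. (1 - (\<lambda>_. 0) j * cnj ((\<lambda>_. 0) i)) * k (?lam i) (?lam j))"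
    by (rule pick_fwd[OF pk, of 2 ?lam "\<lambda>_. 0"])
       (use lb l0 cholo_const inj2[of 0 l] zero_in_ball in \<open>auto simp: all2\<close>)
  from psd_herm[OF p, of 0 1] show ?thesis by simp
qed

lemma unit_vec:
  assumes "l \<noteq> 0"
  defines "u \<equiv> complex_of_real (1 / norm l) *s l"
  shows "norm u = 1" "cip l u = of_real (norm l)"
proof -
  show "norm u = 1" using assms by (simp add: u_def norm_smult_vec norm_divide)
  have "cip l u = of_real (1 / norm l) * of_real ((norm l)^2)"
    by (simp add: u_def cip_scale2 cip_self)
  also have "\<dots> = of_real (1 / norm l * (norm l)^2)"
    by (simp only: of_real_mult)
  also have "\<dots> = of_real (norm l)" using assms
    by (simp add: power2_eq_square)
  finally show "cip l u = of_real (norm l)" .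
qed

lemma cip_zero: "cip 0 u = 0" by (simp add: cip_def)

lemma K2:
  fixes k :: "complex^('n::finite) \<Rightarrow> 'n hfun"
  assumes pk: "pick_property k" and lb: "l \<in> unit_ball" and l0: "l \<noteq> 0"
  shows "k 0 0 * of_real (1 - (norm l)^2) * k l l = k 0 l * k l 0"
proof -
  define \<rho> where "\<rho> = norm l"
  have rp: "\<rho> > 0" "\<rho> < 1" using l0 lb by (auto simp: \<rho>_def unit_ball_iff)
  define u where "u = complex_of_real (1 / norm l) *s l"
  have nu: "norm u = 1" and clu: "cip l u = of_real \<rho>"
    using unit_vec[OF l0] by (simp_all add: u_def \<rho>_def)
  define m where "m = k 0 l"
  define a where "a = Re (k 0 0)"
  define b where "b = Re (k l l)"
  have ka: "k 0 0 = of_real a" "a > 0" using K1[OF pk zero_in_ball] by (simp_all add: a_def)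
  have kb: "k l l = of_real b" "b > 0" using K1[OF pk lb] by (simp_all add: b_def)
  have hm: "k l 0 = cnj m" using K_herm[OF pk lb l0] by (simp add: m_def)
  let ?lam = "\<lambda>i::nat. if i = 0 then 0 else l"
  have inj: "inj_on ?lam {..<2}" using inj2[of 0 l] l0 by simp
  have inb: "\<forall>i<2. ?lam i \<in> unit_ball" using lb zero_in_ball by auto
  let ?z1 = "\<lambda>i::nat. if i = 0 then 0 else complex_of_real \<rho>"
  have p1: "psd_mat 2 (\<lambda>i j. (1 - ?z1 j * cnj (?z1 i)) * k (?lam i) (?lam j))"
    by (rule pick_fwd[OF pk _ inj inb cholo_lin cip_cholo_bound[of u]])
       (use nu clu cip_zero in \<open>auto simp: all2\<close>)
  have le1: "(cmod m)^2 \<le> a * ((1 - \<rho>^2) * b)"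
    using psd2_det[OF p1, of a] ka kb by (simp add: m_def power2_eq_square)
  have eq: "(cmod m)^2 = a * ((1 - \<rho>^2) * b)"
  proof (rule ccontr)
    assume "\<not> ?thesis"
    then have lt: "(cmod m)^2 < a * ((1 - \<rho>^2) * b)" using le1 by simp
    have ab: "a * b > 0" using ka kb by simp
    define q where "q = (cmod m)^2 / (a * b)"
    have "(cmod m)^2 < (1 - \<rho>^2) * (a * b)" using lt by (simp add: algebra_simps)
    then have q1: "q < 1 - \<rho>^2" unfolding q_def using pos_divide_less_eq[OF ab] by blast
    have q0: "q \<ge> 0" using ab by (simp add: q_def)
    define w where "w = sqrt (1 - q)"
    have "q \<le> 1" using q1 zero_le_power2[of \<rho>] by linarith
    then have w2: "w^2 = 1 - q" unfolding w_def by (intro real_sqrt_pow2) simp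
    have w0: "w \<ge> 0" using \<open>q \<le> 1\<close> by (simp add: w_def)
    have wr: "w > \<rho>"
    proof -
      have "\<rho>^2 < w^2" using w2 q1 by simp
      then show ?thesis using w0 rp by (simp add: power2_less_imp_less)
    qed
    let ?z2 = "\<lambda>i::nat. if i = 0 then 0 else complex_of_real w"
    have p2: "psd_mat 2 (\<lambda>i j. (1 - ?z2 j * cnj (?z2 i)) * k (?lam i) (?lam j))"
    proof (rule psd2_intro[where a=a and b="(1 - w^2) * b"])
      show "(cmod ((1 - ?z2 1 * cnj (?z2 0)) * k (?lam 0) (?lam 1)))^2 \<le> a * ((1 - w^2) * b)"
      proof -
        have "1 - w^2 = q" using w2 by simp
        then have "a * ((1 - w^2) * b) = q * (a * b)" by (simp add: mult_ac)
        also have "\<dots> = (cmod m)^2" using ka(2) kb(2) unfolding q_def by simp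
        finally show ?thesis by (simp add: m_def[symmetric])
      qed
    qed (use ka kb hm in \<open>simp_all add: m_def power2_eq_square\<close>)
    obtain \<phi> where ph: "cholo \<phi> unit_ball" "\<forall>w\<in>unit_ball. cmod (\<phi> w) \<le> 1"
      "\<forall>i<2. \<phi> (?lam i) = ?z2 i"
      using pick_bwd[OF pk _ inj inb p2] by auto
    have "\<phi> 0 = 0" "\<phi> l = of_real w" using ph(3) by (auto simp: all2)
    then have "cmod (of_real w) \<le> \<rho>" using cholo_schwarz[OF ph(1,2) _ lb] by (simp add: \<rho>_def)
    then show False using wr w0 by simp
  qed
  have "k 0 0 * of_real (1 - (norm l)^2) * k l l = of_real ((cmod m)^2)"
    unfolding eq using ka kb by (simp add: \<rho>_def algebra_simps)
  also have "\<dots> = m * cnj m" by (rule complex_norm_square)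
  finally show ?thesis by (simp add: hm m_def)
qed



lemma K3:
  fixes k :: "complex^('n::finite) \<Rightarrow> 'n hfun"
  assumes pk: "pick_property k" and lb: "l \<in> unit_ball" and l0: "l \<noteq> 0"
    and mb: "\<mu> \<in> unit_ball" and m0: "\<mu> \<noteq> 0" and lm: "l \<noteq> \<mu>"
  shows "k \<mu> l * k 0 0 * (1 - cip l \<mu>) = k \<mu> 0 * k 0 l"
proof -
  define \<rho> where "\<rho> = norm l"
  have rp: "\<rho> > 0" "\<rho> < 1" using l0 lb by (auto simp: \<rho>_def unit_ball_iff)
  define u where "u = complex_of_real (1 / norm l) *s l"
  have nu: "norm u = 1" and clu: "cip l u = of_real \<rho>"
    using unit_vec[OF l0] by (simp_all add: u_def \<rho>_def)
  have cmu: "of_real \<rho> * cnj (cip \<mu> u) = cip l \<mu>"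
  proof -
    have "cnj (cip \<mu> u) = of_real (1/\<rho>) * cip l \<mu>"
      by (simp add: cip_cnj u_def cip_scale \<rho>_def)
    then show ?thesis using rp by simp
  qed
  define a where "a = Re (k 0 0)"
  have ka: "k 0 0 = of_real a" "a > 0" using K1[OF pk zero_in_ball] by (simp_all add: a_def)
  let ?lam = "\<lambda>i::nat. if i = 0 then 0 else if i = 1 then l else \<mu>"
  have inj: "inj_on ?lam {..<3}" using inj3[of 0 l \<mu>] l0 m0 lm by simp
  have inb: "\<forall>i<3. ?lam i \<in> unit_ball" using lb mb zero_in_ball by auto
  let ?z = "\<lambda>i::nat. if i = 0 then 0 else if i = 1 then complex_of_real \<rho> else cip \<mu> u"
  have p: "psd_mat 3 (\<lambda>i j. (1 - ?z j * cnj (?z i)) * k (?lam i) (?lam j))"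
    by (rule pick_fwd[OF pk _ inj inb cholo_lin cip_cholo_bound[of u]])
       (use nu clu cip_zero in \<open>auto simp: all3\<close>)
  have k2: "k 0 0 * of_real (1 - \<rho>^2) * k l l = k 0 l * k l 0"
    using K2[OF pk lb l0] by (simp add: \<rho>_def)
  have "(\<lambda>i j. (1 - ?z j * cnj (?z i)) * k (?lam i) (?lam j)) 2 1 *
        (\<lambda>i j. (1 - ?z j * cnj (?z i)) * k (?lam i) (?lam j)) 0 0 =
        (\<lambda>i j. (1 - ?z j * cnj (?z i)) * k (?lam i) (?lam j)) 2 0 *
        (\<lambda>i j. (1 - ?z j * cnj (?z i)) * k (?lam i) (?lam j)) 0 1"
  proof (rule psd3_force[OF p, of a])
    show "(1 - ?z 0 * cnj (?z 0)) * k (?lam 0) (?lam 0) = complex_of_real a" using ka by simp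
    show "a > 0" by (rule ka(2))
    show "(1 - ?z 0 * cnj (?z 0)) * k (?lam 0) (?lam 0) * ((1 - ?z 1 * cnj (?z 1)) * k (?lam 1) (?lam 1)) =
          (1 - ?z 1 * cnj (?z 0)) * k (?lam 0) (?lam 1) * ((1 - ?z 0 * cnj (?z 1)) * k (?lam 1) (?lam 0))"
      using k2 by (simp add: power2_eq_square mult.assoc)
  qed
  then have "(1 - of_real \<rho> * cnj (cip \<mu> u)) * k \<mu> l * k 0 0 = k \<mu> 0 * k 0 l" by simp
  then show ?thesis using cmu by (simp add: algebra_simps)
qed

lemma K4:
  fixes k :: "complex^('n::finite) \<Rightarrow> 'n hfun"
  assumes pk: "pick_property k" and lb: "l \<in> unit_ball" and l0: "l \<noteq> 0"
    and mb: "\<mu> \<in> unit_ball" and m0: "\<mu> \<noteq> 0"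
  shows "k \<mu> l = cnj (k 0 \<mu>) * k 0 l / (k 0 0 * (1 - cip l \<mu>))"
proof -
  have e: "k \<mu> l * k 0 0 * (1 - cip l \<mu>) = k \<mu> 0 * k 0 l"
  proof (cases "l = \<mu>")
    case True
    then show ?thesis using K2[OF pk lb l0] by (simp add: cip_self mult_ac)
  next
    case False then show ?thesis by (rule K3[OF pk lb l0 mb m0])
  qed
  have nz1: "k 0 0 \<noteq> 0" using K1[OF pk zero_in_ball] by auto
  have "cmod (cip l \<mu>) < 1"
  proof -
    have n: "norm l < 1" "norm \<mu> < 1" using lb mb by (simp_all add: unit_ball_iff)
    then have "norm l * norm \<mu> \<le> norm l * 1" by (intro mult_left_mono) auto
    then have "norm l * norm \<mu> < 1" using n by linarith
    then show ?thesis using cip_cs[of l \<mu>] by linarith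
  qed
  then have nz2: "1 - cip l \<mu> \<noteq> 0" by auto
  show ?thesis using e nz1 nz2 K_herm[OF pk mb m0] by (simp add: field_simps)
qed



lemma cholo_prod2: "cholo (\<lambda>z::complex^('n::finite). 2 * (z$i * z$j)) S"
  unfolding cholo_def
proof
  fix z :: "complex^'n" assume "z \<in> S"
  have d: "\<And>r. ((\<lambda>z::complex^'n. z$r) has_derivative (\<lambda>h. h$r)) (at z)"
    by (rule bounded_linear_imp_has_derivative[OF bounded_linear_vec_nth])
  have "((\<lambda>z. 2 * (z$i * z$j)) has_derivative (\<lambda>h. 2 * (z$i * h$j + h$i * z$j))) (at z)"
    by (rule has_derivative_mult_right[OF has_derivative_mult[OF d d]])
  moreover have "\<forall>c v. (\<lambda>h. 2 * (z$i * h$j + h$i * z$j)) (c *s v) = c * (\<lambda>h. 2 * (z$i * h$j + h$i * z$j)) v"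
    by (simp add: algebra_simps)
  ultimately show "\<exists>L. ((\<lambda>z. 2 * (z$i * z$j)) has_derivative L) (at z) \<and> (\<forall>c v. L (c *s v) = c * L v)"
    by blast
qed

lemma prod2_bound:
  fixes i j :: "'n::finite"
  assumes ij: "i \<noteq> j"
  shows "\<forall>w\<in>unit_ball. cmod (2 * (w$i * w$j)) \<le> (1::real)"
proof
  fix w :: "complex^'n" assume "w \<in> unit_ball"
  then have w1: "(norm w)^2 < 1" by (simp add: unit_ball_iff abs_square_less_1)
  have "(cmod (w$i))^2 + (cmod (w$j))^2 = (\<Sum>r\<in>{i,j}. (cmod (w$r))^2)" using ij by simp
  also have "\<dots> \<le> (\<Sum>r\<in>UNIV. (cmod (w$r))^2)" by (rule sum_mono2) auto
  also have "\<dots> = (norm w)^2" by (simp add: norm_sq_vec)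
  finally have s: "(cmod (w$i))^2 + (cmod (w$j))^2 < 1" using w1 by linarith
  have "2 * (cmod (w$i) * cmod (w$j)) \<le> (cmod (w$i))^2 + (cmod (w$j))^2"
    using sum_squares_bound[of "cmod (w$i)" "cmod (w$j)"] by (simp add: power2_eq_square)
  then show "cmod (2 * (w$i * w$j)) \<le> 1" using s by (simp add: norm_mult)
qed

lemma KT:
  fixes k :: "complex^('n::finite) \<Rightarrow> 'n hfun"
  assumes pk: "pick_property k" and lb: "l \<in> unit_ball" and l0: "l \<noteq> 0"
    and mb: "\<mu> \<in> unit_ball" and m0: "\<mu> \<noteq> 0"
  shows "cnj (of_real yi / k 0 \<mu>) * (e * k \<mu> l) * (of_real yj / k 0 l)
         = of_real (yi * yj) * e / (1 - cip l \<mu>) / k 0 0"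
proof -
  have nz: "k 0 \<mu> \<noteq> 0" "k 0 l \<noteq> 0"
  proof -
    have p: "\<And>v. v \<in> unit_ball \<Longrightarrow> v \<noteq> 0 \<Longrightarrow> k 0 v \<noteq> 0"
    proof
      fix v assume v: "v \<in> unit_ball" "v \<noteq> 0" "k 0 v = 0"
      have "k 0 0 * of_real (1 - (norm v)^2) * k v v = 0" using K2[OF pk v(1,2)] v(3) by simp
      moreover have "k 0 0 \<noteq> 0" "k v v \<noteq> 0" using K1[OF pk zero_in_ball] K1[OF pk v(1)] by auto
      moreover have "1 - (norm v)^2 \<noteq> 0" using v(1) by (simp add: unit_ball_iff abs_square_eq_1)
      then have "complex_of_real (1 - (norm v)^2) \<noteq> 0" by (metis of_real_eq_0_iff)
      ultimately show False by (metis mult_eq_0_iff)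
    qed
    show "k 0 \<mu> \<noteq> 0" "k 0 l \<noteq> 0" using p mb m0 lb l0 by auto
  qed
  show ?thesis using nz by (simp add: K4[OF pk lb l0 mb m0] field_simps)
qed



lemma sum3: "(\<Sum>i<(3::nat). f i) = f 0 + f 1 + f 2"
  by (simp add: eval_nat_numeral)

lemma two_indices:
  assumes "CARD('n::finite) \<ge> 2"
  shows "\<exists>i1 i2::'n. i1 \<noteq> i2"
proof (rule ccontr)
  assume "\<not> ?thesis"
  then have "(UNIV::'n set) = {undefined}" by auto
  then have "card (UNIV::'n set) = card {undefined::'n}" by (rule arg_cong)
  then show False using assms by simp
qed

lemma no_pick:
  fixes k :: "complex^('n::finite) \<Rightarrow> 'n hfun"
  assumes pk: "pick_property k" and c2: "CARD('n) \<ge> 2"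
  shows False
proof -
  obtain i1 i2 :: 'n where ij: "i1 \<noteq> i2" using two_indices[OF c2] by blast
  define v2 :: "complex \<Rightarrow> complex \<Rightarrow> complex^'n" where
    "v2 a b = (\<chi> r. if r = i1 then a else if r = i2 then b else 0)" for a b
  have v2c: "(v2 a b)$i1 = a" "(v2 a b)$i2 = b" for a b using ij by (simp_all add: v2_def)
  have cipv: "cip (v2 a b) (v2 c d) = a * cnj c + b * cnj d" for a b c d
  proof -
    have "cip (v2 a b) (v2 c d) = (\<Sum>r\<in>UNIV. (if r = i1 then a * cnj c else 0) + (if r = i2 then b * cnj d else 0))"
      unfolding cip_def by (intro sum.cong refl) (use ij in \<open>auto simp: v2_def\<close>)
    also have "\<dots> = a * cnj c + b * cnj d" by (simp add: sum.distrib)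
    finally show ?thesis .
  qed
  have inball: "v2 a b \<in> unit_ball" if "a * cnj a + b * cnj b = 1/2" for a b
  proof -
    have "complex_of_real ((norm (v2 a b))^2) = 1/2" using cip_self[of "v2 a b"] cipv[of a b a b] that by simp
    then have "(norm (v2 a b))^2 = 1/2"
      by (metis of_real_divide of_real_eq_iff of_real_numeral of_real_1)
    then have "(norm (v2 a b))^2 < 1^2" by simp
    then show ?thesis unfolding unit_ball_iff using power2_less_imp_less by fastforce
  qed
  define P1 where "P1 = v2 (-1/2) (-1/2)"
  define P2 where "P2 = v2 (-1/2) (1/2)"
  define P3 where "P3 = v2 (1/2) (-1/2)"
  have Pb: "P1 \<in> unit_ball" "P2 \<in> unit_ball" "P3 \<in> unit_ball"
    unfolding P1_def P2_def P3_def by (intro inball; simp)+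
  have vne: "v2 a b \<noteq> v2 c d" if "a \<noteq> c \<or> b \<noteq> d" for a b c d
    using that v2c by metis
  have vn0: "v2 a b \<noteq> 0" if "a \<noteq> 0" for a b
  proof
    assume "v2 a b = 0"
    then have "(v2 a b)$i1 = 0" by simp
    then show False using that v2c by simp
  qed
  have Pd: "P1 \<noteq> P2" "P1 \<noteq> P3" "P2 \<noteq> P3" "P1 \<noteq> 0" "P2 \<noteq> 0" "P3 \<noteq> 0"
    unfolding P1_def P2_def P3_def by (intro vne vn0; simp)+
  define lam where "lam = (\<lambda>i::nat. if i = 0 then P1 else if i = 1 then P2 else P3)"
  define z :: "nat \<Rightarrow> complex" where "z = (\<lambda>i. if i = 0 then 1/2 else -1/2)"
  have inj: "inj_on lam {..<3}" unfolding lam_def by (rule inj3) (use Pd in auto)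
  have inb: "\<forall>i<3. lam i \<in> unit_ball" using Pb by (auto simp: lam_def)
  have ln0: "\<forall>i<3. lam i \<noteq> 0" using Pd by (auto simp: lam_def)
  define M where "M = (\<lambda>i j. (1 - z j * cnj (z i)) * k (lam i) (lam j))"
  have p: "psd_mat 3 M" unfolding M_def
    by (rule pick_fwd[OF pk _ inj inb cholo_prod2[of i1 i2] prod2_bound[OF ij]])
       (auto simp: all3 lam_def z_def P1_def P2_def P3_def v2c)
  define y :: "nat \<Rightarrow> real" where "y = (\<lambda>i. if i = 0 then -3 else 2)"
  define x where "x = (\<lambda>i. complex_of_real (y i) / k 0 (lam i))"
  define T where "T = (\<lambda>i j. complex_of_real (y i * y j) * (1 - z j * cnj (z i)) / (1 - cip (lam j) (lam i)) / k 0 0)"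
  have trm: "cnj (x i) * M i j * x j = T i j" if "i < 3" "j < 3" for i j
    unfolding x_def M_def T_def
    by (rule KT[OF pk]) (use that inb ln0 in auto)
  have "qf 3 M x = (\<Sum>i<3. \<Sum>j<3. T i j)" unfolding qf_def
    by (intro sum.cong refl) (simp add: trm)
  also have "\<dots> = (-1/2) / k 0 0"
    by (simp add: sum3 T_def y_def z_def lam_def P1_def P2_def P3_def cipv)
  finally have q: "qf 3 M x = (-1/2) / k 0 0" .
  define a where "a = Re (k 0 0)"
  have ka: "k 0 0 = of_real a" "a > 0" using K1[OF pk zero_in_ball] by (simp_all add: a_def)
  have "Re (qf 3 M x) = -1 / (2 * a)" unfolding q ka by simp
  then have "Re (qf 3 M x) < 0" using ka(2) by simp
  then show False using psdE[OF p, of x] by simp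
qed

theorem mainTheorem14:
  assumes "CARD('n::{finite,linorder}) \<ge> 2"
  shows "\<not> (\<exists>(H :: 'n hfun set) ip k. regular_hilbert_space H ip k \<and> pick_property k)"
  using no_pick[OF _ assms] by blast

end
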